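(* There is a quantity $\eta_n\to0$ as $n\to\infty$ (uniform over configurations, edges, and graphs in $\mathcal H_L$) such that for every $X\in\mathcal G_n$, every pair $e$, and every $G=(V,E)\in\mathcal H_L$, if $X(0)=X$ and $X(1)$ is obtained by one step of the Glauber dynamics, then $$\mathbb E\left[\frac{N_G(X(1),e)-N_G(X(0),e)}{n^{|V|-2}}\right]\le(1+\eta_n)\frac{2}{\binom n2}|E|(|E|-1)\Big[-r_G(X,e)^{|E|-1}+\varphi(\bar r(X))\,\bar r(X)^{|E|-2}\Big].$$
   Context: Fix an integer $s\ge 1$, graphs $G_1,\dots,G_s$ where $G_i$ has vertex set $V_i=\{1,\dots,|V_i|\}$ and edge set $E_i$, with $G_1$ the single edge on $\{1,2\}$, and an integer $L\ge\max_i|V_i|$. Fix $\beta=(\beta_1,\dots,\beta_s)$ with $\beta_1\in\mathbb R$, $\beta_i>0$ for $i\ge 2$. $\mathcal G_n$ is the set of simple graphs on $[n]$ (a graph is its edge set). For a graph $G=(V,E)$, $V=\{1,\dots,m\}$, and $X\in\mathcal G_n$: $N_G(X)$ is the number of injective $\sigma:V\to[n]$ with $\{\sigma(i),\sigma(j)\}\in X$ for all $\{i,j\}\in E$; for a pair $e\in\binom{[n]}2$, $N_G(X,e)$ is the number of injective $\sigma:V\to[n]$ such that $\{\sigma(i),\sigma(j)\}\in X\cup\{e\}$ for all $\{i,j\}\in E$ and $e=\{\sigma(i),\sigma(j)\}$ for some $\{i,j\}\in E$. Gibbs measure $p_n(X)\propto\exp(H(X))$, $H(X)=\sum_i\beta_iN_{G_i}(X)/n^{|V_i|-2}$.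 Glauber dynamics: from $X$, pick a pair $e$ uniformly among the $\binom n2$ pairs, move to $X\cup\{e\}$ with probability $e^{\partial_eH(X)}/(1+e^{\partial_eH(X)})$, where $\partial_eH(X)=H(X\cup\{e\})-H(X\setminus\{e\})$, and to $X\setminus\{e\}$ otherwise. $\Psi(p)=\sum_{i=1}^s2\beta_i|E_i|p^{|E_i|-1}$, $\varphi(p)=e^{\Psi(p)}/(1+e^{\Psi(p)})$. $\mathcal H_L$ is the set of graphs with at most $L$ vertices and at least $2$ edges. For $G=(V,E)\in\mathcal H_L$: $r_G(X,e)=\big(N_G(X,e)/(2|E|n^{|V|-2})\big)^{1/(|E|-1)}$, and $\bar r(X)=\max_{e,\,G\in\mathcal H_L}r_G(X,e)$. *)

theory Defs
  imports Complex_Main "HOL-Library.FuncSet"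
begin

definition pairs :: "nat \<Rightarrow> nat set set" where
  "pairs n = {e. e \<subseteq> {1..n} \<and> card e = 2}"

definition graphs_on :: "nat \<Rightarrow> nat set set set" where
  "graphs_on n = Pow (pairs n)"

text \<open>A small graph G = (m, E) with vertex set {1..m} and edge set E.\<close>
type_synonym sgraph = "nat \<times> nat set set"

definition is_sgraph :: "sgraph \<Rightarrow> bool" where
  "is_sgraph G \<longleftrightarrow> snd G \<subseteq> pairs (fst G)"

definition hom_count :: "sgraph \<Rightarrow> nat \<Rightarrow> nat set set \<Rightarrow> nat" where
  "hom_count G n X = card {\<sigma> \<in> {1..fst G} \<rightarrow>\<^sub>E {1..n}.
      inj_on \<sigma> {1..fst G} \<and> (\<forall>ep\<in>snd G. \<sigma> ` ep \<in> X)}"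

definition hom_count_e :: "sgraph \<Rightarrow> nat \<Rightarrow> nat set set \<Rightarrow> nat set \<Rightarrow> nat" where
  "hom_count_e G n X e = card {\<sigma> \<in> {1..fst G} \<rightarrow>\<^sub>E {1..n}.
      inj_on \<sigma> {1..fst G} \<and> (\<forall>ep\<in>snd G. \<sigma> ` ep \<in> X \<union> {e}) \<and> (\<exists>ep\<in>snd G. \<sigma> ` ep = e)}"

text \<open>Hamiltonian H(X) = sum_i beta_i N_{G_i}(X) / n^(|V_i|-2); indices 0-based.\<close>
definition ham :: "sgraph list \<Rightarrow> real list \<Rightarrow> nat \<Rightarrow> nat set set \<Rightarrow> real" where
  "ham Gs \<beta> n X = (\<Sum>i<length Gs. \<beta> ! i * real (hom_count (Gs ! i) n X)
       / (real n powi (int (fst (Gs ! i)) - 2)))"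

definition dham :: "sgraph list \<Rightarrow> real list \<Rightarrow> nat \<Rightarrow> nat set set \<Rightarrow> nat set \<Rightarrow> real" where
  "dham Gs \<beta> n X e = ham Gs \<beta> n (X \<union> {e}) - ham Gs \<beta> n (X - {e})"

definition glauber_expect ::
  "sgraph list \<Rightarrow> real list \<Rightarrow> nat \<Rightarrow> nat set set \<Rightarrow> (nat set set \<Rightarrow> real) \<Rightarrow> real" where
  "glauber_expect Gs \<beta> n X f =
     (\<Sum>e'\<in>pairs n. (1 / real (n choose 2)) *
        ((exp (dham Gs \<beta> n X e') / (1 + exp (dham Gs \<beta> n X e'))) * f (X \<union> {e'})
         + (1 - exp (dham Gs \<beta> n X e') / (1 + exp (dham Gs \<beta> n X e'))) * f (X - {e'})))"

definition Psi :: "sgraph list \<Rightarrow> real list \<Rightarrow> real \<Rightarrow> real" where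
  "Psi Gs \<beta> p = (\<Sum>i<length Gs. 2 * \<beta> ! i * real (card (snd (Gs ! i)))
       * p ^ (card (snd (Gs ! i)) - 1))"

definition phi :: "sgraph list \<Rightarrow> real list \<Rightarrow> real \<Rightarrow> real" where
  "phi Gs \<beta> p = exp (Psi Gs \<beta> p) / (1 + exp (Psi Gs \<beta> p))"

definition HL :: "nat \<Rightarrow> sgraph set" where
  "HL L = {G. is_sgraph G \<and> fst G \<le> L \<and> card (snd G) \<ge> 2}"

definition rG :: "sgraph \<Rightarrow> nat \<Rightarrow> nat set set \<Rightarrow> nat set \<Rightarrow> real" where
  "rG G n X e = (real (hom_count_e G n X e) /
       (2 * real (card (snd G)) * real n powi (int (fst G) - 2)))
       powr (1 / (real (card (snd G)) - 1))"

definition rbar :: "nat \<Rightarrow> nat \<Rightarrow> nat set set \<Rightarrow> real" where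
  "rbar L n X = Max {rG G n X e | e G. e \<in> pairs n \<and> G \<in> HL L}"

end

theory Submission
  imports Defs
begin

lemma finite_pairs: "finite (pairs n)"
  by (rule finite_subset[of _ "Pow {1..n}"]) (auto simp: pairs_def)

lemma finite_fun_set: fixes m n :: nat shows "finite {\<sigma> \<in> {1..m} \<rightarrow>\<^sub>E {1..n}. P \<sigma>}"
proof -
  have "finite ({1..m} \<rightarrow>\<^sub>E {1..n})" by (rule finite_PiE) auto
  then show ?thesis by (rule finite_subset[rotated]) auto
qed

lemma pairs_mono: "m \<le> L \<Longrightarrow> pairs m \<subseteq> pairs L"
  by (auto simp: pairs_def)

lemma finite_HL: "finite (HL L)"
proof (rule finite_subset[of _ "{..L} \<times> Pow (pairs L)"])
  show "HL L \<subseteq> {..L} \<times> Pow (pairs L)"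
  proof
    fix G assume "G \<in> HL L"
    then have "fst G \<le> L" "snd G \<subseteq> pairs (fst G)" by (auto simp: HL_def is_sgraph_def)
    then have "fst G \<in> {..L}" "snd G \<in> Pow (pairs L)" using pairs_mono by auto
    then show "G \<in> {..L} \<times> Pow (pairs L)" by (simp add: mem_Times_iff)
  qed
  show "finite ({..L} \<times> Pow (pairs L))" using finite_pairs[of L] by simp
qed

lemma card_filter_sum:
  assumes "finite A"
  shows "card {x\<in>A. P x} = (\<Sum>x\<in>A. if P x then 1 else (0::nat))"
  using assms by (simp add: sum.inter_filter[symmetric])

lemma indicator_swap:
  assumes "finite A" "finite B"
  shows "(\<Sum>y\<in>B. card {x\<in>A. R x y}) = (\<Sum>x\<in>A. card {y\<in>B. R x y})"
proof -
  have "(\<Sum>y\<in>B. card {x\<in>A. R x y}) = (\<Sum>y\<in>B. \<Sum>x\<in>A. if R x y then 1 else 0)"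
    using assms by (simp only: card_filter_sum)
  also have "\<dots> = (\<Sum>x\<in>A. \<Sum>y\<in>B. if R x y then 1 else 0)" by (rule sum.swap)
  also have "\<dots> = (\<Sum>x\<in>A. card {y\<in>B. R x y})"
    using assms by (simp only: card_filter_sum)
  finally show ?thesis .
qed

lemma fiber_sum_le:
  assumes "finite T" "finite Y"
  shows "(\<Sum>y\<in>Y. card {x\<in>T. g x = y}) \<le> card T"
proof -
  have "(\<Sum>y\<in>Y. card {x\<in>T. g x = y}) = (\<Sum>x\<in>T. card {y\<in>Y. g x = y})"
    by (rule indicator_swap[OF assms])
  also have "\<dots> \<le> (\<Sum>x\<in>T. 1)"
  proof (rule sum_mono)
    fix x assume "x \<in> T"
    have sub1: "{y\<in>Y. g x = y} \<subseteq> {g x}" by auto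
    show "card {y\<in>Y. g x = y} \<le> 1"
      using card_mono[OF _ sub1] by simp
  qed
  finally show ?thesis by simp
qed

lemma fiber_bound:
  assumes ab: "a \<in> {1..m}" "b \<in> {1..m}" "a \<noteq> b" and ce: "card e' = 2"
  shows "card {\<sigma> \<in> {1..m} \<rightarrow>\<^sub>E {1..n}. inj_on \<sigma> {1..m} \<and> \<sigma> ` {a,b} = e'} \<le> 2 * n^(m-2)"
proof -
  let ?S = "{\<sigma> \<in> {1..m} \<rightarrow>\<^sub>E {1..n}. inj_on \<sigma> {1..m} \<and> \<sigma> ` {a,b} = e'}"
  let ?R = "{1..m} - {a,b}"
  define f where "f \<sigma> = (\<sigma> a, restrict \<sigma> ?R)" for \<sigma> :: "nat \<Rightarrow> nat"
  have inj: "inj_on f ?S"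
  proof (rule inj_onI)
    fix \<sigma> \<tau> assume s: "\<sigma> \<in> ?S" and t: "\<tau> \<in> ?S" and eq: "f \<sigma> = f \<tau>"
    have a: "\<sigma> a = \<tau> a" using eq by (simp add: f_def)
    have "restrict \<sigma> ?R = restrict \<tau> ?R" using eq by (simp add: f_def)
    then have r: "\<And>x. x \<in> ?R \<Longrightarrow> \<sigma> x = \<tau> x"
      by (metis restrict_apply')
    have iss: "inj_on \<sigma> {1..m}" using s by blast
    have it: "inj_on \<tau> {1..m}" using t by blast
    have sb: "\<sigma> a \<noteq> \<sigma> b" using ab iss by (meson inj_onD)
    have tb: "\<tau> a \<noteq> \<tau> b" using ab it by (meson inj_onD)
    have "{\<sigma> a, \<sigma> b} = {\<tau> a, \<tau> b}" using s t by simp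
    then have b: "\<sigma> b = \<tau> b" using a sb tb by (auto simp: doubleton_eq_iff)
    have sp: "\<sigma> \<in> {1..m} \<rightarrow>\<^sub>E {1..n}" using s by blast
    have tp: "\<tau> \<in> {1..m} \<rightarrow>\<^sub>E {1..n}" using t by blast
    show "\<sigma> = \<tau>"
    proof (rule PiE_ext[OF sp tp])
      fix x assume "x \<in> {1..m}"
      then show "\<sigma> x = \<tau> x" using a b r by (cases "x = a \<or> x = b") auto
    qed
  qed
  have sub: "f ` ?S \<subseteq> e' \<times> (?R \<rightarrow>\<^sub>E {1..n})"
  proof
    fix y assume "y \<in> f ` ?S"
    then obtain \<sigma> where s: "\<sigma> \<in> ?S" and y: "y = f \<sigma>" by blast
    have "\<sigma> a \<in> e'" using s by blast
    moreover have "restrict \<sigma> ?R \<in> ?R \<rightarrow>\<^sub>E {1..n}"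
    proof -
      have "\<sigma> \<in> {1..m} \<rightarrow>\<^sub>E {1..n}" using s by blast
      then have "\<forall>x\<in>?R. \<sigma> x \<in> {1..n}" by (meson DiffD1 PiE_mem)
      then show ?thesis by (simp only: restrict_PiE_iff)
    qed
    ultimately show "y \<in> e' \<times> (?R \<rightarrow>\<^sub>E {1..n})" using y by (simp add: f_def)
  qed
  have "card ?S = card (f ` ?S)" using inj by (simp add: card_image)
  also have "\<dots> \<le> card (e' \<times> (?R \<rightarrow>\<^sub>E {1..n}))"
  proof (rule card_mono[OF _ sub])
    have "finite e'" using ce by (metis card.infinite zero_neq_numeral)
    then show "finite (e' \<times> (?R \<rightarrow>\<^sub>E {1..n}))" by (auto intro!: finite_PiE)
  qed
  also have "\<dots> = 2 * n ^ card ?R"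
    using ce by (simp add: card_cartesian_product card_PiE)
  also have "card ?R = m - 2"
  proof -
    have "{a,b} \<subseteq> {1..m}" using ab by blast
    moreover have "card {a,b} = 2" using ab by simp
    ultimately show ?thesis by (simp add: card_Diff_subset)
  qed
  finally show ?thesis .
qed

lemma hom_split:
  "real (hom_count G n (X \<union> {e'})) - real (hom_count G n (X - {e'})) = real (hom_count_e G n X e')"
proof -
  let ?P = "{1..fst G} \<rightarrow>\<^sub>E {1..n}"
  define S1 where "S1 = {\<sigma> \<in> ?P. inj_on \<sigma> {1..fst G} \<and> (\<forall>ep\<in>snd G. \<sigma> ` ep \<in> X \<union> {e'})}"
  define S2 where "S2 = {\<sigma> \<in> ?P. inj_on \<sigma> {1..fst G} \<and> (\<forall>ep\<in>snd G. \<sigma> ` ep \<in> X - {e'})}"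
  define S3 where "S3 = {\<sigma> \<in> ?P. inj_on \<sigma> {1..fst G} \<and> (\<forall>ep\<in>snd G. \<sigma> ` ep \<in> X \<union> {e'}) \<and> (\<exists>ep\<in>snd G. \<sigma> ` ep = e')}"
  have u: "S1 = S2 \<union> S3" unfolding S1_def S2_def S3_def by blast
  have d: "S2 \<inter> S3 = {}" unfolding S2_def S3_def by blast
  have f2: "finite S2" unfolding S2_def by (rule finite_fun_set)
  have f3: "finite S3" unfolding S3_def by (rule finite_fun_set)
  have "card S1 = card S2 + card S3" using u d f2 f3 by (simp add: card_Un_disjoint)
  moreover have "hom_count G n (X \<union> {e'}) = card S1" unfolding hom_count_def S1_def by simp
  moreover have "hom_count G n (X - {e'}) = card S2" unfolding hom_count_def S2_def by simp
  moreover have "hom_count_e G n X e' = card S3" unfolding hom_count_e_def S3_def by simp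
  ultimately show ?thesis by simp
qed

lemma powr_pow_cancel:
  fixes x :: real and c :: nat
  assumes "x \<ge> 0" "c \<ge> 2"
  shows "(x powr (1 / (real c - 1))) ^ (c - 1) = x"
proof (cases "x = 0")
  case True then show ?thesis using assms by simp
next
  case False
  then have xp: "x > 0" using assms by simp
  have rc: "real c - 1 = real (c - 1)" using assms by simp
  have "(x powr (1 / (real c - 1))) ^ (c - 1) = (x powr (1 / real (c-1))) powr (real (c - 1))"
    using xp by (simp add: rc powr_realpow)
  also have "\<dots> = x powr (1 / real (c-1) * real (c-1))" by (simp add: powr_powr)
  also have "\<dots> = x" using assms xp by simp
  finally show ?thesis .
qed

lemma sigmoid_mono:
  fixes a b :: real assumes "a \<le> b"
  shows "exp a / (1 + exp a) \<le> exp b / (1 + exp b)"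
proof -
  have pa: "1 + exp a > 0" and pb: "1 + exp b > 0" by (simp_all add: add_pos_pos)
  have "exp a * (1 + exp b) \<le> exp b * (1 + exp a)" using assms by (simp add: algebra_simps)
  then show ?thesis using pa pb by (simp add: divide_simps)
qed

lemma pairs_card: "e \<in> pairs n \<Longrightarrow> card e = 2" by (simp add: pairs_def)

lemma hce_empty: "hom_count_e (m, {}) n X e = 0"
  by (simp add: hom_count_e_def)

lemma hce_one:
  assumes k: "k \<in> pairs m" and e: "card e = 2"
  shows "hom_count_e (m, {k}) n X e \<le> 2 * n ^ (m - 2)"
proof -
  obtain a b where ab: "k = {a,b}" "a \<noteq> b" using k by (auto simp: pairs_def card_2_iff)
  have abm: "a \<in> {1..m}" "b \<in> {1..m}" using k ab by (auto simp: pairs_def)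
  have "hom_count_e (m, {k}) n X e \<le> card {\<sigma> \<in> {1..m} \<rightarrow>\<^sub>E {1..n}. inj_on \<sigma> {1..m} \<and> \<sigma> ` {a,b} = e}"
    unfolding hom_count_e_def using ab
    by (intro card_mono[OF finite_fun_set]) auto
  also have "\<dots> \<le> 2 * n ^ (m - 2)" by (rule fiber_bound[OF abm ab(2) e])
  finally show ?thesis .
qed

lemma hce_G0:
  assumes e: "e \<in> pairs n"
  shows "hom_count_e (2, {{1,2}}) n X e = 2"
proof -
  obtain x y where xy: "e = {x,y}" "x \<noteq> y" using e by (auto simp: pairs_def card_2_iff)
  have xyn: "x \<in> {1..n}" "y \<in> {1..n}" using e xy by (auto simp: pairs_def)
  let ?S = "{\<sigma> \<in> {1..2::nat} \<rightarrow>\<^sub>E {1..n}. inj_on \<sigma> {1..2} \<and> \<sigma> ` {1,2} = e}"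
  have eq: "hom_count_e (2, {{1,2}}) n X e = card ?S"
    unfolding hom_count_e_def by (intro arg_cong[where f=card]) auto
  have le: "card ?S \<le> 2 * n ^ (2 - 2)"
    by (rule fiber_bound) (auto simp: pairs_card[OF e])
  define s1 where "s1 = (\<lambda>i::nat. if i = 1 then x else if i = 2 then y else undefined)"
  define s2 where "s2 = (\<lambda>i::nat. if i = 1 then y else if i = 2 then x else undefined)"
  have i12: "{1..2::nat} = {1,2}" by auto
  have "s1 \<in> {1..2::nat} \<rightarrow>\<^sub>E {1..n}" using xyn by (auto simp: s1_def PiE_iff extensional_def)
  moreover have "inj_on s1 {1..2}" unfolding i12 using xy by (simp add: s1_def)
  moreover have "s1 ` {1,2} = e" unfolding s1_def using xy by auto
  ultimately have m1: "s1 \<in> ?S" by blast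
  have "s2 \<in> {1..2::nat} \<rightarrow>\<^sub>E {1..n}" using xyn by (auto simp: s2_def PiE_iff extensional_def)
  moreover have "inj_on s2 {1..2}" unfolding i12 using xy by (simp add: s2_def)
  moreover have "s2 ` {1,2} = e" unfolding s2_def using xy by auto
  ultimately have m2: "s2 \<in> ?S" by blast
  have ne: "s1 \<noteq> s2"
  proof
    assume "s1 = s2" then have "s1 1 = s2 1" by simp
    then show False using xy by (simp add: s1_def s2_def)
  qed
  have sub: "{s1, s2} \<subseteq> ?S" using m1 m2 by blast
  have c2: "card {s1,s2} = 2" using ne by simp
  have "2 \<le> card ?S" using card_mono[OF finite_fun_set sub] c2 by simp
  with le eq show ?thesis by simp
qed

definition Aset :: "sgraph \<Rightarrow> nat \<Rightarrow> nat set set \<Rightarrow> nat set \<Rightarrow> (nat \<Rightarrow> nat) set" where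
  "Aset G n Y e = {\<sigma> \<in> {1..fst G} \<rightarrow>\<^sub>E {1..n}.
      inj_on \<sigma> {1..fst G} \<and> (\<forall>ep\<in>snd G. \<sigma> ` ep \<in> Y \<union> {e}) \<and> (\<exists>ep\<in>snd G. \<sigma> ` ep = e)}"

lemma hce_Aset: "hom_count_e G n Y e = card (Aset G n Y e)"
  by (simp add: hom_count_e_def Aset_def)

lemma finite_Aset: "finite (Aset G n Y e)"
  unfolding Aset_def by (rule finite_fun_set)

lemma Aset_mono: "Y1 \<subseteq> Y2 \<Longrightarrow> Aset G n Y1 e \<subseteq> Aset G n Y2 e"
  unfolding Aset_def by blast

lemma hce_mono: "Y1 \<subseteq> Y2 \<Longrightarrow> hom_count_e G n Y1 e \<le> hom_count_e G n Y2 e"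
  unfolding hce_Aset by (intro card_mono finite_Aset Aset_mono)

lemma card_split:
  assumes "finite A"
  shows "card A = card {x\<in>A. P x} + card {x\<in>A. \<not> P x}"
proof -
  have "A = {x\<in>A. P x} \<union> {x\<in>A. \<not> P x}" by blast
  moreover have "{x\<in>A. P x} \<inter> {x\<in>A. \<not> P x} = {}" by blast
  ultimately show ?thesis using assms
    by (metis (no_types, lifting) card_Un_disjoint finite_Un)
qed

lemma img_inj:
  assumes "E \<subseteq> pairs m" "inj_on \<sigma> {1..m}"
  shows "inj_on (\<lambda>ep. \<sigma> ` ep) E"
proof (rule inj_onI)
  fix x y assume "x \<in> E" "y \<in> E" "\<sigma> ` x = \<sigma> ` y"
  moreover have "x \<subseteq> {1..m}" "y \<subseteq> {1..m}" using assms(1) \<open>x \<in> E\<close> \<open>y \<in> E\<close>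
    by (auto simp: pairs_def)
  ultimately show "x = y" using assms(2) by (simp add: inj_on_image_eq_iff)
qed

lemma sumX:
  assumes E: "E \<subseteq> pairs m" and fX: "finite X"
  shows "(\<Sum>e'\<in>X. real (hom_count_e (m,E) n (X \<union> {e'}) e) - real (hom_count_e (m,E) n (X - {e'}) e))
         = real (card E - 1) * real (hom_count_e (m,E) n X e)"
proof -
  define A where "A = Aset (m,E) n X e"
  define img where "img \<sigma> = (\<lambda>ep. \<sigma> ` ep) ` E" for \<sigma> :: "nat \<Rightarrow> nat"
  have fA: "finite A" unfolding A_def by (rule finite_Aset)
  have pt: "real (hom_count_e (m,E) n (X \<union> {e'}) e) - real (hom_count_e (m,E) n (X - {e'}) e)
          = real (card {\<sigma>\<in>A. e' \<noteq> e \<and> e' \<in> img \<sigma>})" if "e' \<in> X" for e'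
  proof -
    have "X \<union> {e'} = X" using that by blast
    then have a1: "Aset (m,E) n (X \<union> {e'}) e = A" unfolding A_def by simp
    have a2: "Aset (m,E) n (X - {e'}) e = {\<sigma>\<in>A. \<not> (e' \<noteq> e \<and> e' \<in> img \<sigma>)}"
    proof (rule set_eqI, rule iffI)
      fix \<sigma> assume s: "\<sigma> \<in> Aset (m,E) n (X - {e'}) e"
      have "\<sigma> \<in> A" using s Aset_mono[of "X - {e'}" X] unfolding A_def by blast
      moreover have "\<not> (e' \<noteq> e \<and> e' \<in> img \<sigma>)"
      proof
        assume h: "e' \<noteq> e \<and> e' \<in> img \<sigma>"
        then obtain ep where "ep \<in> E" "\<sigma> ` ep = e'" unfolding img_def by blast
        moreover have "\<forall>ep\<in>E. \<sigma> ` ep \<in> (X - {e'}) \<union> {e}" using s unfolding Aset_def by simp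
        ultimately show False using h by auto
      qed
      ultimately show "\<sigma> \<in> {\<sigma>\<in>A. \<not> (e' \<noteq> e \<and> e' \<in> img \<sigma>)}" by blast
    next
      fix \<sigma> assume s: "\<sigma> \<in> {\<sigma>\<in>A. \<not> (e' \<noteq> e \<and> e' \<in> img \<sigma>)}"
      have pi: "\<sigma> \<in> {1..m} \<rightarrow>\<^sub>E {1..n}" "inj_on \<sigma> {1..m}"
        and all: "\<forall>ep\<in>E. \<sigma> ` ep \<in> X \<union> {e}" and ex: "\<exists>ep\<in>E. \<sigma> ` ep = e"
        using s unfolding A_def Aset_def by auto
      have ne: "e' = e \<or> (\<forall>ep\<in>E. \<sigma> ` ep \<noteq> e')" using s unfolding img_def by blast
      have "\<forall>ep\<in>E. \<sigma> ` ep \<in> (X - {e'}) \<union> {e}" using all ne by blast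
      then show "\<sigma> \<in> Aset (m,E) n (X - {e'}) e" using pi ex unfolding Aset_def by simp
    qed
    have "card A = card {\<sigma>\<in>A. e' \<noteq> e \<and> e' \<in> img \<sigma>} + card {\<sigma>\<in>A. \<not> (e' \<noteq> e \<and> e' \<in> img \<sigma>)}"
      by (rule card_split[OF fA])
    then show ?thesis unfolding hce_Aset a1 a2 by simp
  qed
  have "(\<Sum>e'\<in>X. real (hom_count_e (m,E) n (X \<union> {e'}) e) - real (hom_count_e (m,E) n (X - {e'}) e))
      = (\<Sum>e'\<in>X. real (card {\<sigma>\<in>A. e' \<noteq> e \<and> e' \<in> img \<sigma>}))"
    by (rule sum.cong[OF refl pt])
  also have "\<dots> = real (\<Sum>e'\<in>X. card {\<sigma>\<in>A. e' \<noteq> e \<and> e' \<in> img \<sigma>})" by simp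
  also have "(\<Sum>e'\<in>X. card {\<sigma>\<in>A. e' \<noteq> e \<and> e' \<in> img \<sigma>}) = (\<Sum>\<sigma>\<in>A. card {e'\<in>X. e' \<noteq> e \<and> e' \<in> img \<sigma>})"
    by (rule indicator_swap[OF fA fX])
  also have "\<dots> = (\<Sum>\<sigma>\<in>A. card E - 1)"
  proof (rule sum.cong)
    fix \<sigma> assume s: "\<sigma> \<in> A"
    have inj: "inj_on \<sigma> {1..m}" using s unfolding A_def Aset_def by simp
    have ci: "card (img \<sigma>) = card E" unfolding img_def by (rule card_image[OF img_inj[OF E inj]])
    have eimg: "e \<in> img \<sigma>" using s unfolding A_def Aset_def img_def by auto
    have "\<forall>ep\<in>E. \<sigma> ` ep \<in> X \<union> {e}" using s unfolding A_def Aset_def by simp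
    then have sub: "img \<sigma> \<subseteq> X \<union> {e}" unfolding img_def by blast
    have "{e'\<in>X. e' \<noteq> e \<and> e' \<in> img \<sigma>} = img \<sigma> - {e}" using sub by blast
    moreover have "finite (img \<sigma>)" unfolding img_def
      using finite_subset[OF E finite_pairs] by simp
    ultimately show "card {e'\<in>X. e' \<noteq> e \<and> e' \<in> img \<sigma>} = card E - 1"
      using eimg ci by simp
  qed simp
  also have "\<dots> = card A * (card E - 1)" by simp
  finally show ?thesis unfolding A_def hce_Aset by simp
qed

lemma sumP:
  assumes E: "E \<subseteq> pairs m" and fP: "finite P"
  shows "(\<Sum>e'\<in>P. hom_count_e (m,E) n (X \<union> {e'}) e - hom_count_e (m,E) n (X - {e'}) e)
         \<le> (\<Sum>k\<in>E. hom_count_e (m, E - {k}) n X e)"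
proof -
  define T where "T k = Aset (m, E - {k}) n X e" for k
  have fE: "finite E" using finite_subset[OF E finite_pairs] .
  have pt: "hom_count_e (m,E) n (X \<union> {e'}) e - hom_count_e (m,E) n (X - {e'}) e
          \<le> (\<Sum>k\<in>E. card {\<sigma>\<in>T k. \<sigma> ` k = e'})" for e'
  proof -
    define A1 where "A1 = Aset (m,E) n (X \<union> {e'}) e"
    define A2 where "A2 = Aset (m,E) n (X - {e'}) e"
    have s12: "A2 \<subseteq> A1" unfolding A1_def A2_def by (rule Aset_mono) blast
    have f1: "finite A1" unfolding A1_def by (rule finite_Aset)
    have "A1 - A2 \<subseteq> (\<Union>k\<in>E. {\<sigma>\<in>T k. \<sigma> ` k = e'})"
    proof
      fix \<sigma> assume s: "\<sigma> \<in> A1 - A2"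
      have pi: "\<sigma> \<in> {1..m} \<rightarrow>\<^sub>E {1..n}" and inj: "inj_on \<sigma> {1..m}"
        and all: "\<forall>ep\<in>E. \<sigma> ` ep \<in> X \<union> {e'} \<union> {e}" and ex: "\<exists>ep\<in>E. \<sigma> ` ep = e"
        using s unfolding A1_def Aset_def by auto
      have "\<not> (\<forall>ep\<in>E. \<sigma> ` ep \<in> (X - {e'}) \<union> {e})"
        using s pi inj ex unfolding A2_def Aset_def by auto
      then obtain k where kE: "k \<in> E" and nk: "\<sigma> ` k \<notin> (X - {e'}) \<union> {e}" by blast
      have ke: "\<sigma> ` k = e'" using nk all kE by blast
      have ii: "inj_on (\<lambda>ep. \<sigma> ` ep) E" by (rule img_inj[OF E inj])
      have "\<forall>ep\<in>E - {k}. \<sigma> ` ep \<in> X \<union> {e}"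
      proof
        fix ep assume ep: "ep \<in> E - {k}"
        then have "\<sigma> ` ep \<noteq> \<sigma> ` k" using ii kE by (auto dest: inj_onD)
        then show "\<sigma> ` ep \<in> X \<union> {e}" using all ep ke by auto
      qed
      moreover have "\<exists>ep\<in>E - {k}. \<sigma> ` ep = e" using ex nk by auto
      ultimately have "\<sigma> \<in> T k" using pi inj unfolding T_def Aset_def by simp
      then show "\<sigma> \<in> (\<Union>k\<in>E. {\<sigma>\<in>T k. \<sigma> ` k = e'})" using kE ke by blast
    qed
    then have "card (A1 - A2) \<le> card (\<Union>k\<in>E. {\<sigma>\<in>T k. \<sigma> ` k = e'})"
    proof (rule card_mono[rotated])
      show "finite (\<Union>k\<in>E. {\<sigma>\<in>T k. \<sigma> ` k = e'})"
      proof (rule finite_UN_I[OF fE])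
        fix k show "finite {\<sigma>\<in>T k. \<sigma> ` k = e'}"
          by (rule finite_subset[OF _ finite_Aset[of "(m, E - {k})" n X e]]) (auto simp: T_def)
      qed
    qed
    also have "\<dots> \<le> (\<Sum>k\<in>E. card {\<sigma>\<in>T k. \<sigma> ` k = e'})" by (rule card_UN_le[OF fE])
    finally show ?thesis unfolding A1_def A2_def hce_Aset
      using card_Diff_subset[OF finite_subset[OF s12 f1] s12] s12 unfolding A1_def A2_def by simp
  qed
  have "(\<Sum>e'\<in>P. hom_count_e (m,E) n (X \<union> {e'}) e - hom_count_e (m,E) n (X - {e'}) e)
      \<le> (\<Sum>e'\<in>P. \<Sum>k\<in>E. card {\<sigma>\<in>T k. \<sigma> ` k = e'})" by (rule sum_mono) (rule pt)
  also have "\<dots> = (\<Sum>k\<in>E. \<Sum>e'\<in>P. card {\<sigma>\<in>T k. \<sigma> ` k = e'})" by (rule sum.swap)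
  also have "\<dots> \<le> (\<Sum>k\<in>E. card (T k))"
    by (rule sum_mono) (rule fiber_sum_le[OF _ fP], simp add: T_def finite_Aset)
  finally show ?thesis unfolding T_def hce_Aset .
qed

lemma rG_nonneg: "rG H n X e \<ge> 0"
  by (simp add: rG_def)

lemma rG_pow:
  assumes "card (snd H) \<ge> 2" "n > 0"
  shows "rG H n X e ^ (card (snd H) - 1)
         = real (hom_count_e H n X e) / (2 * real (card (snd H)) * real n powi (int (fst H) - 2))"
  unfolding rG_def
proof (rule powr_pow_cancel)
  show "0 \<le> real (hom_count_e H n X e) / (2 * real (card (snd H)) * real n powi (int (fst H) - 2))"
    using assms by simp
qed (use assms in simp)

lemma term_bound:
  assumes H: "is_sgraph H" "fst H \<le> L" and n: "n > 0"
    and rle: "\<forall>G'\<in>HL L. rG G' n X e' \<le> rb" and e': "card e' = 2"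
  shows "real (hom_count_e H n X e') / (real n powi (int (fst H) - 2))
         \<le> 2 * real (card (snd H)) * rb ^ (card (snd H) - 1)"
proof -
  obtain m E where HmE: "H = (m, E)" by fastforce
  have E: "E \<subseteq> pairs m" using H HmE by (simp add: is_sgraph_def)
  have fE: "finite E" using finite_subset[OF E finite_pairs] .
  have wpos: "real n powi (int m - 2) > 0" using n by simp
  consider "card E = 0" | "card E = 1" | "card E \<ge> 2" by linarith
  then show ?thesis
  proof cases
    case 1
    then have "E = {}" using fE by simp
    then show ?thesis using HmE by (simp add: hce_empty)
  next
    case 2
    then obtain k where Ek: "E = {k}" by (meson card_1_singletonE)
    have k: "k \<in> pairs m" using E Ek by simp
    have "2 = card k" using k by (simp add: pairs_def)
    also have "\<dots> \<le> card {1..m}" using k by (intro card_mono) (auto simp: pairs_def)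
    finally have m2: "m \<ge> 2" by simp
    have w: "real n powi (int m - 2) = real n ^ (m - 2)"
    proof -
      have "int m - 2 = int (m - 2)" using m2 by linarith
      then show ?thesis by (metis power_int_of_nat)
    qed
    have le: "hom_count_e (m, {k}) n X e' \<le> 2 * n ^ (m - 2)" by (rule hce_one[OF k e'])
    then have "real (hom_count_e (m, {k}) n X e') \<le> 2 * real n ^ (m - 2)"
      by (metis of_nat_le_iff of_nat_mult of_nat_numeral of_nat_power)
    then have "real (hom_count_e (m, {k}) n X e') / real n ^ (m - 2) \<le> 2"
      using n by (simp add: divide_le_eq)
    then show ?thesis using HmE Ek w by simp
  next
    case 3
    have HL: "H \<in> HL L" using H 3 HmE by (simp add: HL_def)
    have r0: "rG H n X e' \<ge> 0" by (rule rG_nonneg)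
    have rr: "rG H n X e' \<le> rb" using rle HL by blast
    have eq: "rG H n X e' ^ (card E - 1) = real (hom_count_e H n X e') / (2 * real (card E) * real n powi (int m - 2))"
      using rG_pow[of H n X e'] 3 n HmE by simp
    have cpos: "real (card E) > 0" using 3 by simp
    have "real (hom_count_e H n X e') / (real n powi (int m - 2)) = 2 * real (card E) * rG H n X e' ^ (card E - 1)"
      using eq cpos wpos by (simp add: field_simps)
    also have "\<dots> \<le> 2 * real (card E) * rb ^ (card E - 1)"
      using power_mono[OF rr r0] cpos by simp
    finally show ?thesis using HmE by simp
  qed
qed

lemma dham_eq:
  "dham Gs \<beta> n X e' = (\<Sum>i<length Gs. \<beta> ! i * real (hom_count_e (Gs ! i) n X e')
       / (real n powi (int (fst (Gs ! i)) - 2)))"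
proof -
  have "dham Gs \<beta> n X e' = (\<Sum>i<length Gs. \<beta> ! i * real (hom_count (Gs ! i) n (X \<union> {e'}))
       / (real n powi (int (fst (Gs ! i)) - 2)) - \<beta> ! i * real (hom_count (Gs ! i) n (X - {e'}))
       / (real n powi (int (fst (Gs ! i)) - 2)))"
    unfolding dham_def ham_def by (simp add: sum_subtractf)
  also have "\<dots> = (\<Sum>i<length Gs. \<beta> ! i * real (hom_count_e (Gs ! i) n X e')
       / (real n powi (int (fst (Gs ! i)) - 2)))"
  proof (rule sum.cong[OF refl])
    fix i
    have "\<beta> ! i * real (hom_count (Gs ! i) n (X \<union> {e'})) / (real n powi (int (fst (Gs ! i)) - 2))
        - \<beta> ! i * real (hom_count (Gs ! i) n (X - {e'})) / (real n powi (int (fst (Gs ! i)) - 2))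
        = \<beta> ! i * (real (hom_count (Gs ! i) n (X \<union> {e'})) - real (hom_count (Gs ! i) n (X - {e'})))
          / (real n powi (int (fst (Gs ! i)) - 2))"
      by (simp add: diff_divide_distrib right_diff_distrib)
    then show "\<beta> ! i * real (hom_count (Gs ! i) n (X \<union> {e'})) / (real n powi (int (fst (Gs ! i)) - 2))
        - \<beta> ! i * real (hom_count (Gs ! i) n (X - {e'})) / (real n powi (int (fst (Gs ! i)) - 2))
        = \<beta> ! i * real (hom_count_e (Gs ! i) n X e') / (real n powi (int (fst (Gs ! i)) - 2))"
      by (simp only: hom_split)
  qed
  finally show ?thesis .
qed

lemma sum_form:
  fixes a b :: "'a \<Rightarrow> real"
  shows "(\<Sum>x\<in>A. k * ((a x - b x) / w)) = k / w * (sum a A - sum b A)"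
proof -
  have "(\<Sum>x\<in>A. k * ((a x - b x) / w)) = (\<Sum>x\<in>A. k / w * a x - k / w * b x)"
    by (rule sum.cong) (simp_all add: field_simps diff_divide_distrib)
  also have "\<dots> = k / w * sum a A - k / w * sum b A"
    by (simp add: sum_subtractf sum_distrib_left)
  finally show ?thesis by (simp add: right_diff_distrib)
qed

lemma glauber_rewrite:
  "glauber_expect Gs \<beta> n X (\<lambda>Y. (f Y - f X) / w)
   = (\<Sum>e'\<in>pairs n. (1 / real (n choose 2)) *
       (((exp (dham Gs \<beta> n X e') / (1 + exp (dham Gs \<beta> n X e'))) * (f (X \<union> {e'}) - f (X - {e'}))
         - (if e' \<in> X then f (X \<union> {e'}) - f (X - {e'}) else 0)) / w))"
  unfolding glauber_expect_def
proof (rule sum.cong[OF refl])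
  fix e'
  define q where "q = exp (dham Gs \<beta> n X e') / (1 + exp (dham Gs \<beta> n X e'))"
  show "1 / real (n choose 2) * (q * ((f (X \<union> {e'}) - f X) / w) + (1 - q) * ((f (X - {e'}) - f X) / w))
      = 1 / real (n choose 2) * ((q * (f (X \<union> {e'}) - f (X - {e'})) - (if e' \<in> X then f (X \<union> {e'}) - f (X - {e'}) else 0)) / w)"
  proof (cases "e' \<in> X")
    case True
    then have "X \<union> {e'} = X" by blast
    then show ?thesis using True
      by (cases "w = 0"; cases "real (n choose 2) = 0") (simp_all add: field_simps)
  next
    case False
    then have "X - {e'} = X" by blast
    then show ?thesis using False
      by (cases "w = 0"; cases "real (n choose 2) = 0") (simp_all add: field_simps)
  qed
qed

lemma sig_nonneg: "0 \<le> exp (x::real) / (1 + exp x)"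
  by (simp add: add_pos_pos less_imp_le)

theorem mainTheorem5:
  fixes Gs :: "sgraph list" and \<beta> :: "real list" and L :: nat
  assumes "length Gs \<ge> 1"
    and "length \<beta> = length Gs"
    and "\<forall>i<length Gs. is_sgraph (Gs ! i)"
    and "Gs ! 0 = (2, {{1, 2}})"
    and "\<forall>i<length Gs. i \<ge> 1 \<longrightarrow> \<beta> ! i > 0"
    and "\<forall>i<length Gs. fst (Gs ! i) \<le> L"
  shows "\<exists>\<eta> :: nat \<Rightarrow> real. \<eta> \<longlonglongrightarrow> 0 \<and>
    (\<forall>n X e G. X \<in> graphs_on n \<longrightarrow> e \<in> pairs n \<longrightarrow> G \<in> HL L \<longrightarrow>
       glauber_expect Gs \<beta> n X
         (\<lambda>Y. (real (hom_count_e G n Y e) - real (hom_count_e G n X e))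
                / real n powi (int (fst G) - 2))
       \<le> (1 + \<eta> n) * (2 / real (n choose 2))
          * real (card (snd G)) * (real (card (snd G)) - 1)
          * (- (rG G n X e ^ (card (snd G) - 1))
             + phi Gs \<beta> (rbar L n X) * rbar L n X ^ (card (snd G) - 2)))"
proof (intro exI[of _ "\<lambda>_. 0"] conjI allI impI)
  show "(\<lambda>_. 0::real) \<longlonglongrightarrow> 0" by simp
next
  fix n X e G
  assume X: "X \<in> graphs_on n" and e: "e \<in> pairs n" and G: "G \<in> HL L"
  obtain m E where GmE: "G = (m, E)" by fastforce
  have Esub: "E \<subseteq> pairs m" and mL: "m \<le> L" and c2: "card E \<ge> 2"
    using G GmE by (auto simp: HL_def is_sgraph_def)
  have fE: "finite E" using finite_subset[OF Esub finite_pairs] .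
  have Xsub: "X \<subseteq> pairs n" using X by (simp add: graphs_on_def)
  have fX: "finite X" using finite_subset[OF Xsub finite_pairs] .
  have ce: "card e = 2" using e by (simp add: pairs_def)
  have n2: "n \<ge> 2"
  proof -
    have "2 = card e" using ce by simp
    also have "\<dots> \<le> card {1..n}" using e by (intro card_mono) (auto simp: pairs_def)
    finally show ?thesis by simp
  qed
  have npos: "n > 0" using n2 by simp
  define w where "w = real n powi (int m - 2)"
  have wpos: "w > 0" using npos by (simp add: w_def)
  define C where "C = real (n choose 2)"
  have Cpos: "C > 0" using n2 zero_less_binomial[of 2 n] by (simp add: C_def)
  define rb where "rb = rbar L n X"
  define R where "R = {rG G' n X e' | e' G'. e' \<in> pairs n \<and> G' \<in> HL L}"
  have Rfin: "finite R"
  proof -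
    have "R = (\<lambda>(e', G'). rG G' n X e') ` (pairs n \<times> HL L)" unfolding R_def by auto
    then show ?thesis using finite_pairs finite_HL by simp
  qed
  have rbR: "rb = Max R" unfolding rb_def rbar_def R_def by simp
  have rle: "\<forall>G'\<in>HL L. rG G' n X e' \<le> rb" if e'P: "e' \<in> pairs n" for e'
  proof
    fix G' assume "G' \<in> HL L"
    then have "rG G' n X e' \<in> R" unfolding R_def using e'P by blast
    then show "rG G' n X e' \<le> rb" unfolding rbR using Rfin by simp
  qed
  define phiv where "phiv = phi Gs \<beta> rb"
  have phi0: "phiv \<ge> 0" unfolding phiv_def phi_def by (rule sig_nonneg)
  define p where "p e' = exp (dham Gs \<beta> n X e') / (1 + exp (dham Gs \<beta> n X e'))" for e'
  have ple: "p e' \<le> phiv" if e'P: "e' \<in> pairs n" for e'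
  proof -
    have "dham Gs \<beta> n X e' \<le> Psi Gs \<beta> rb"
      unfolding dham_eq Psi_def
    proof (rule sum_mono)
      fix i assume i: "i \<in> {..<length Gs}"
      show "\<beta> ! i * real (hom_count_e (Gs ! i) n X e') / (real n powi (int (fst (Gs ! i)) - 2))
          \<le> 2 * \<beta> ! i * real (card (snd (Gs ! i))) * rb ^ (card (snd (Gs ! i)) - 1)"
      proof (cases "i = 0")
        case True
        then have g: "Gs ! i = (2, {{1,2}})" using assms(4) by simp
        show ?thesis unfolding g using hce_G0[OF e'P] by simp
      next
        case False
        then have bpos: "\<beta> ! i > 0" using assms(5) i by auto
        have h1: "is_sgraph (Gs ! i)" using assms(3) i by auto
        have h2: "fst (Gs ! i) \<le> L" using assms(6) i by auto
        have tb: "real (hom_count_e (Gs ! i) n X e') / (real n powi (int (fst (Gs ! i)) - 2))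
            \<le> 2 * real (card (snd (Gs ! i))) * rb ^ (card (snd (Gs ! i)) - 1)"
          by (rule term_bound[OF h1 h2 npos rle[OF e'P] pairs_card[OF e'P]])
        have "\<beta> ! i * (real (hom_count_e (Gs ! i) n X e') / (real n powi (int (fst (Gs ! i)) - 2)))
            \<le> \<beta> ! i * (2 * real (card (snd (Gs ! i))) * rb ^ (card (snd (Gs ! i)) - 1))"
          by (rule mult_left_mono[OF tb less_imp_le[OF bpos]])
        then show ?thesis by (simp add: algebra_simps)
      qed
    qed
    then show ?thesis unfolding p_def phiv_def phi_def by (rule sigmoid_mono)
  qed
  define hc where "hc Y = real (hom_count_e G n Y e)" for Y
  define D where "D e' = hc (X \<union> {e'}) - hc (X - {e'})" for e'
  have D0: "D e' \<ge> 0" for e'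
  proof -
    have "hom_count_e G n (X - {e'}) e \<le> hom_count_e G n (X \<union> {e'}) e" by (rule hce_mono) blast
    then show ?thesis unfolding D_def hc_def by simp
  qed
  define N0 where "N0 = real (hom_count_e G n X e)"
  define c where "c = card E"
  define r where "r = rG G n X e"
  have cG: "card (snd G) = c" "fst G = m" using GmE c_def by simp_all
  have rpow: "r ^ (c - 1) = N0 / (2 * real c * w)"
    using rG_pow[of G n X e] c2 npos unfolding r_def N0_def w_def cG c_def by (simp add: GmE)
  have cpos: "real c > 0" using c2 c_def by simp
  have N0eq: "N0 = 2 * real c * w * r ^ (c - 1)" using rpow cpos wpos by (simp add: field_simps)
  have rc: "real (c - 1) = real c - 1" using c2 c_def by simp
  have sumD: "(\<Sum>e'\<in>pairs n. D e') \<le> real c * (2 * (real c - 1) * w * rb ^ (c - 2))"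
  proof -
    have "(\<Sum>e'\<in>pairs n. D e') = real (\<Sum>e'\<in>pairs n. hom_count_e (m,E) n (X \<union> {e'}) e - hom_count_e (m,E) n (X - {e'}) e)"
    proof -
      have "D e' = real (hom_count_e (m,E) n (X \<union> {e'}) e - hom_count_e (m,E) n (X - {e'}) e)" for e'
      proof -
        have "hom_count_e (m,E) n (X - {e'}) e \<le> hom_count_e (m,E) n (X \<union> {e'}) e" by (rule hce_mono) blast
        then show ?thesis unfolding D_def hc_def GmE by (simp add: of_nat_diff)
      qed
      then show ?thesis by simp
    qed
    also have "\<dots> \<le> real (\<Sum>k\<in>E. hom_count_e (m, E - {k}) n X e)"
      using sumP[OF Esub finite_pairs, of n X e] by (simp only: of_nat_le_iff)
    also have "\<dots> = (\<Sum>k\<in>E. real (hom_count_e (m, E - {k}) n X e))" by simp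
    also have "\<dots> \<le> (\<Sum>k\<in>E. 2 * (real c - 1) * w * rb ^ (c - 2))"
    proof (rule sum_mono)
      fix k assume k: "k \<in> E"
      have h1: "is_sgraph (m, E - {k})" using Esub by (auto simp: is_sgraph_def)
      have h2: "fst (m, E - {k}) \<le> L" using mL by simp
      have ck: "card (snd (m, E - {k})) = c - 1" using k fE c_def by simp
      have tb: "real (hom_count_e (m, E - {k}) n X e) / w \<le> 2 * real (c - 1) * rb ^ (c - 1 - 1)"
        using term_bound[OF h1 h2 npos rle[OF e] ce] unfolding ck w_def by simp
      have "c - 1 - 1 = c - 2" by simp
      then show "real (hom_count_e (m, E - {k}) n X e) \<le> 2 * (real c - 1) * w * rb ^ (c - 2)"
        using tb wpos rc by (simp add: divide_le_eq mult.commute mult.left_commute)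
    qed
    also have "\<dots> = real c * (2 * (real c - 1) * w * rb ^ (c - 2))" using c_def by simp
    finally show ?thesis .
  qed
  have S1le: "(\<Sum>e'\<in>pairs n. p e' * D e') \<le> phiv * (real c * (2 * (real c - 1) * w * rb ^ (c - 2)))"
  proof -
    have "(\<Sum>e'\<in>pairs n. p e' * D e') \<le> (\<Sum>e'\<in>pairs n. phiv * D e')"
      by (rule sum_mono) (rule mult_right_mono[OF ple D0])
    also have "\<dots> = phiv * (\<Sum>e'\<in>pairs n. D e')" by (simp add: sum_distrib_left)
    also have "\<dots> \<le> phiv * (real c * (2 * (real c - 1) * w * rb ^ (c - 2)))"
      by (rule mult_left_mono[OF sumD phi0])
    finally show ?thesis .
  qed
  have S2: "(\<Sum>e'\<in>pairs n. if e' \<in> X then D e' else 0) = (real c - 1) * N0"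
  proof -
    have "(\<Sum>e'\<in>pairs n. if e' \<in> X then D e' else 0) = (\<Sum>e'\<in>pairs n \<inter> X. D e')"
      by (rule sum.inter_restrict[OF finite_pairs, symmetric])
    also have "pairs n \<inter> X = X" using Xsub by blast
    also have "(\<Sum>e'\<in>X. D e') = real (card E - 1) * real (hom_count_e (m,E) n X e)"
      unfolding D_def hc_def GmE by (rule sumX[OF Esub fX])
    finally show ?thesis unfolding N0_def GmE c_def[symmetric] rc .
  qed
  have LHS: "glauber_expect Gs \<beta> n X
         (\<lambda>Y. (real (hom_count_e G n Y e) - real (hom_count_e G n X e)) / real n powi (int (fst G) - 2))
      = 1 / C / w * ((\<Sum>e'\<in>pairs n. p e' * D e') - (\<Sum>e'\<in>pairs n. if e' \<in> X then D e' else 0))"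
  proof -
    have "glauber_expect Gs \<beta> n X
         (\<lambda>Y. (real (hom_count_e G n Y e) - real (hom_count_e G n X e)) / real n powi (int (fst G) - 2))
        = glauber_expect Gs \<beta> n X (\<lambda>Y. (hc Y - hc X) / w)"
      unfolding hc_def w_def cG ..
    also have "\<dots> = (\<Sum>e'\<in>pairs n. (1 / C) * ((p e' * D e' - (if e' \<in> X then D e' else 0)) / w))"
      unfolding glauber_rewrite C_def p_def D_def ..
    also have "\<dots> = 1 / C / w * ((\<Sum>e'\<in>pairs n. p e' * D e') - (\<Sum>e'\<in>pairs n. if e' \<in> X then D e' else 0))"
      by (rule sum_form)
    finally show ?thesis .
  qed
  have fin: "1 / C / w * ((\<Sum>e'\<in>pairs n. p e' * D e') - (\<Sum>e'\<in>pairs n. if e' \<in> X then D e' else 0))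
      \<le> 1 / C / w * (phiv * (real c * (2 * (real c - 1) * w * rb ^ (c - 2))) - (real c - 1) * N0)"
    unfolding S2 using S1le Cpos wpos by (intro mult_left_mono) simp_all
  also have "\<dots> = (1 + 0) * (2 / C) * real c * (real c - 1) * (- (r ^ (c - 1)) + phiv * rb ^ (c - 2))"
    using Cpos wpos cpos by (simp add: N0eq field_simps)
  finally have fin2: "1 / C / w * ((\<Sum>e'\<in>pairs n. p e' * D e') - (\<Sum>e'\<in>pairs n. if e' \<in> X then D e' else 0))
      \<le> (1 + 0) * (2 / C) * real c * (real c - 1) * (- (r ^ (c - 1)) + phiv * rb ^ (c - 2))" .
  have "glauber_expect Gs \<beta> n X
         (\<lambda>Y. (real (hom_count_e G n Y e) - real (hom_count_e G n X e)) / real n powi (int (fst G) - 2))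
      \<le> (1 + 0) * (2 / C) * real c * (real c - 1) * (- (r ^ (c - 1)) + phiv * rb ^ (c - 2))"
    by (rule ord_eq_le_trans[OF LHS fin2])
  then show "glauber_expect Gs \<beta> n X
         (\<lambda>Y. (real (hom_count_e G n Y e) - real (hom_count_e G n X e)) / real n powi (int (fst G) - 2))
       \<le> (1 + 0) * (2 / real (n choose 2))
          * real (card (snd G)) * (real (card (snd G)) - 1)
          * (- (rG G n X e ^ (card (snd G) - 1))
             + phi Gs \<beta> (rbar L n X) * rbar L n X ^ (card (snd G) - 2))"
    by (simp add: cG C_def r_def rb_def phiv_def)
qed

end
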